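(* If $x\in\mathbb R^n$ satisfies $Ax\le\tilde b$ for every $\tilde b\in B_1\times\cdots\times B_m$, then there exists $w\in\mathcal W$ such that $x=x(w)$. That is, $$\{x: Ax\le\tilde b\ \ \forall\tilde b\in B_1\times\cdots\times B_m\}\subseteq\{x(w):w\in\mathcal W\}.$$
   Context: $A\in\mathbb R^{m\times n}$ (rows $a_i^\top$) has full column rank $n\le m$, $b^{(0)}\in\mathbb R^m$, and $\{x:Ax\le b^{(0)}\}$ is bounded with nonempty interior. For $w\in\mathbb R^m_{++}$, the weighted center $(x(w),y(w),s(w))$ is the unique solution of $Ax+s=b^{(0)}$, $s>0$, $A^\top y=0$, $\mathrm{Diag}(s)y=w$. For each $i$, $\Delta b_i=(\Delta b_i^1,\dots,\Delta b_i^{N_i})$ is a nonzero vector with nonnegative entries and $B_i=\{b_i^{(0)}+\sum_{l=1}^{N_i}\Delta b_i^lz^l: z\in[-1,1]^{N_i}\}$. $\mathcal W=\{w\in\mathbb R^m_{++}: \sum_iw_i=1,\ y_i(w)\|\Delta b_i\|_1\le w_i<1\ \forall i\}$. *)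

theory Defs
  imports "HOL-Analysis.Analysis"
begin

definition is_wcenter ::
  "real^'n^'m \<Rightarrow> real^'m \<Rightarrow> real^'m \<Rightarrow> real^'n \<Rightarrow> real^'m \<Rightarrow> real^'m \<Rightarrow> bool" where
  "is_wcenter A b0 w x y s \<longleftrightarrow>
     A *v x + s = b0 \<and> (\<forall>i. s $ i > 0) \<and> transpose A *v y = 0 \<and> (\<forall>i. s $ i * y $ i = w $ i)"

definition wcenter :: "real^'n^'m \<Rightarrow> real^'m \<Rightarrow> real^'m \<Rightarrow> (real^'n) \<times> (real^'m) \<times> (real^'m)" where
  "wcenter A b0 w = (THE (x, y, s). is_wcenter A b0 w x y s)"

definition wx :: "real^'n^'m \<Rightarrow> real^'m \<Rightarrow> real^'m \<Rightarrow> real^'n" where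
  "wx A b0 w = fst (wcenter A b0 w)"

definition wy :: "real^'n^'m \<Rightarrow> real^'m \<Rightarrow> real^'m \<Rightarrow> real^'m" where
  "wy A b0 w = fst (snd (wcenter A b0 w))"

text \<open>Delta b_i = (Db i 1, ..., Db i (N i)); its 1-norm.\<close>
definition dnorm1 :: "('m \<Rightarrow> nat) \<Rightarrow> ('m \<Rightarrow> nat \<Rightarrow> real) \<Rightarrow> 'm \<Rightarrow> real" where
  "dnorm1 N Db i = (\<Sum>l\<in>{1..N i}. \<bar>Db i l\<bar>)"

definition Bset :: "real^'m \<Rightarrow> ('m \<Rightarrow> nat) \<Rightarrow> ('m \<Rightarrow> nat \<Rightarrow> real) \<Rightarrow> 'm \<Rightarrow> real set" where
  "Bset b0 N Db i = {b0 $ i + (\<Sum>l\<in>{1..N i}. Db i l * z l) | z.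
                       \<forall>l\<in>{1..N i}. -1 \<le> z l \<and> z l \<le> 1}"

definition Wset :: "real^'n^'m \<Rightarrow> real^'m \<Rightarrow> ('m \<Rightarrow> nat) \<Rightarrow> ('m \<Rightarrow> nat \<Rightarrow> real) \<Rightarrow> (real^'m) set" where
  "Wset A b0 N Db = {w. (\<forall>i. w $ i > 0) \<and> (\<Sum>i\<in>UNIV. w $ i) = 1 \<and>
      (\<forall>i. wy A b0 w $ i * dnorm1 N Db i \<le> w $ i \<and> w $ i < 1)}"

end

theory Submission
  imports Defs
begin

lemma inner_vec_real: "inner (u::real^'m) v = (\<Sum>i\<in>UNIV. u$i * v$i)"
  by (simp add: inner_vec_def)

lemma aux: fixes s1 s2 w :: real assumes "s1>0" "s2>0"
  shows "(w/s1 - w/s2) * (s1 - s2) = - (w * (s1 - s2)^2 / (s1 * s2))"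
  using assms by (simp add: field_simps power2_eq_square)

lemma wcenter_unique:
  fixes A :: "real^'n^'m"
  assumes h1: "is_wcenter A b0 w x1 y1 s1" and h2: "is_wcenter A b0 w x2 y2 s2"
    and wpos: "\<forall>i. w$i > 0" and inj: "inj ((*v) A)"
  shows "x1 = x2 \<and> y1 = y2 \<and> s1 = s2"
proof -
  have e1: "A *v x1 + s1 = b0" "\<forall>i. s1$i > 0" "transpose A *v y1 = 0" "\<forall>i. s1$i*y1$i = w$i"
    using h1 by (auto simp: is_wcenter_def)
  have e2: "A *v x2 + s2 = b0" "\<forall>i. s2$i > 0" "transpose A *v y2 = 0" "\<forall>i. s2$i*y2$i = w$i"
    using h2 by (auto simp: is_wcenter_def)
  have sd: "s1 - s2 = A *v (x2 - x1)"
    using e1(1) e2(1) by (simp add: matrix_vector_mult_diff_distrib algebra_simps)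
  have "transpose A *v (y1 - y2) = 0"
    using e1(3) e2(3) by (simp add: matrix_vector_mult_diff_distrib)
  then have "inner (y1 - y2) (s1 - s2) = 0"
    unfolding sd by (metis dot_lmul_matrix inner_zero_left transpose_matrix_vector)
  then have sum0: "(\<Sum>i\<in>UNIV. (y1$i - y2$i) * (s1$i - s2$i)) = 0"
    by (simp add: inner_vec_real)
  have termeq: "(y1$i - y2$i) * (s1$i - s2$i) = - (w$i * (s1$i - s2$i)^2 / (s1$i * s2$i))" for i
  proof -
    have a: "y1$i = w$i / s1$i" "y2$i = w$i / s2$i"
      using e1(2,4) e2(2,4) by (metis nonzero_mult_div_cancel_left less_irrefl)+
    show ?thesis using e1(2) e2(2) unfolding a by (simp add: aux)
  qed
  have nn: "0 \<le> w$i * (s1$i - s2$i)^2 / (s1$i * s2$i)" for i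
    using wpos e1(2) e2(2) by (intro divide_nonneg_pos mult_nonneg_nonneg) (auto intro: less_imp_le)
  have "(\<Sum>i\<in>UNIV. w$i * (s1$i - s2$i)^2 / (s1$i * s2$i)) = 0"
    using sum0 unfolding termeq by (simp add: sum_negf)
  then have "\<forall>i. w$i * (s1$i - s2$i)^2 / (s1$i * s2$i) = 0"
    using nn by (simp add: sum_nonneg_eq_0_iff)
  then have ss: "s1 = s2"
    using wpos e1(2) e2(2) by (auto simp: vec_eq_iff) (metis less_irrefl)
  have yy: "y1 = y2"
    using e1(2,4) e2(4) ss by (auto simp: vec_eq_iff) (metis mult_left_cancel less_irrefl)
  have "A *v x1 = A *v x2" using e1(1) e2(1) ss by (metis add_right_cancel)
  then have "x1 = x2" using inj by (simp add: inj_eq)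
  with ss yy show ?thesis by simp
qed

theorem propositionC1:
  fixes A :: "real^'n^'m" and b0 :: "real^'m"
    and N :: "'m \<Rightarrow> nat" and Db :: "'m \<Rightarrow> nat \<Rightarrow> real"
    and x :: "real^'n"
  assumes rankA: "rank A = CARD('n)"
    and nm: "CARD('n) \<le> CARD('m)"
    and bdd: "bounded {v. \<forall>i. (A *v v) $ i \<le> b0 $ i}"
    and int: "interior {v. \<forall>i. (A *v v) $ i \<le> b0 $ i} \<noteq> {}"
    and Db_nonneg: "\<And>i l. l \<in> {1..N i} \<Longrightarrow> Db i l \<ge> 0"
    and Db_nonzero: "\<And>i. \<exists>l\<in>{1..N i}. Db i l \<noteq> 0"
    and robust: "\<And>bt :: real^'m. (\<forall>i. bt $ i \<in> Bset b0 N Db i) \<Longrightarrow> (\<forall>i. (A *v x) $ i \<le> bt $ i)"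
  shows "\<exists>w\<in>Wset A b0 N Db. x = wx A b0 w"
proof -
  have inj: "inj ((*v) A)" using rankA full_rank_injective by blast
  define d where "d i = dnorm1 N Db i" for i
  have dpos: "d i > 0" for i
  proof -
    obtain l where l: "l \<in> {1..N i}" "Db i l \<noteq> 0" using Db_nonzero by blast
    have "\<bar>Db i l\<bar> \<le> (\<Sum>l\<in>{1..N i}. \<bar>Db i l\<bar>)"
      by (rule member_le_sum) (use l in auto)
    then show ?thesis using l by (simp add: d_def dnorm1_def)
  qed
  define bt where "bt = (\<chi> i. b0$i - d i)"
  have "bt $ i \<in> Bset b0 N Db i" for i
  proof -
    have "(\<Sum>l\<in>{1..N i}. Db i l * (-1)) = - d i"
      by (simp add: d_def dnorm1_def sum_negf) (intro sum.cong, auto simp: Db_nonneg)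
    then show ?thesis unfolding Bset_def bt_def
      by (auto intro!: exI[of _ "\<lambda>l. -1"])
  qed
  then have Axle: "(A *v x) $ i \<le> b0$i - d i" for i
    using robust[of bt] by (simp add: bt_def)
  define s where "s = b0 - A *v x"
  have sge: "s$i \<ge> d i" for i using Axle[of i] by (simp add: s_def)
  have spos: "s$i > 0" for i using sge[of i] dpos[of i] by linarith
  \<comment> \<open>Stiemke-type alternative via separation\<close>
  define S where "S = convex hull (range (\<lambda>i. axis i (1::real) :: real^'m))"
  define T where "T = range ((*v) A)"
  have Ssub: "S \<subseteq> {p. (\<forall>i. p$i \<ge> 0) \<and> (\<Sum>i\<in>UNIV. p$i) = 1}"
    unfolding S_def
  proof (rule hull_minimal)
    show "range (\<lambda>i. axis i (1::real) :: real^'m) \<subseteq> {p. (\<forall>i. p$i \<ge> 0) \<and> (\<Sum>i\<in>UNIV. p$i) = 1}"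
      by (auto simp: axis_def)
    show "convex {p::real^'m. (\<forall>i. p$i \<ge> 0) \<and> (\<Sum>i\<in>UNIV. p$i) = 1}"
      unfolding convex_def by (auto simp: sum.distrib sum_distrib_left[symmetric])
  qed
  have xP: "x \<in> {v. \<forall>i. (A *v v) $ i \<le> b0 $ i}"
    using Axle dpos by (smt (verit) mem_Collect_eq)
  have disj: "S \<inter> T = {}"
  proof (rule ccontr)
    assume "S \<inter> T \<noteq> {}"
    then obtain v where p: "\<forall>i. (A *v v)$i \<ge> 0" "(\<Sum>i\<in>UNIV. (A *v v)$i) = 1"
      using Ssub unfolding T_def by blast
    have "v \<noteq> 0" using p(2) by auto
    then have nv: "norm v > 0" by simp
    obtain B where B: "\<forall>u\<in>{v. \<forall>i. (A *v v) $ i \<le> b0 $ i}. norm u \<le> B"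
      using bdd bounded_iff by blast
    define t where "t = (B + norm x + 1) / norm v"
    have tpos: "t \<ge> 0" using B xP nv unfolding t_def by (smt (verit) divide_nonneg_pos norm_ge_zero)
    have "x - t *\<^sub>R v \<in> {v. \<forall>i. (A *v v) $ i \<le> b0 $ i}"
      using xP p(1) tpos
      by (auto simp: matrix_vector_mult_diff_distrib matrix_vector_mult_scaleR)
        (smt (verit, best) mult_nonneg_nonneg)
    then have "norm (x - t *\<^sub>R v) \<le> B" using B by blast
    moreover have "norm (t *\<^sub>R v) \<le> norm (x - t *\<^sub>R v) + norm x"
      by (metis norm_minus_commute norm_triangle_sub add.commute)
    moreover have "norm (t *\<^sub>R v) = B + norm x + 1"
      using tpos nv B xP by (simp add: t_def) (smt (verit) norm_ge_zero)
    ultimately show False by linarith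
  qed
  have "convex S" "compact S" "S \<noteq> {}" unfolding S_def
    by (auto simp: convex_convex_hull compact_convex_hull finite_imp_compact)
  moreover have "convex T" "closed T" unfolding T_def
    by (auto intro!: convex_linear_image
        simp: closed_subspace linear_subspace_image matrix_vector_mul_linear)
  ultimately obtain a b where ab: "\<forall>p\<in>S. inner a p < b" "\<forall>u\<in>T. inner a u > b"
    using separating_hyperplane_compact_closed disj by metis
  have T0: "inner a (A *v v) = 0" for v
  proof (rule ccontr)
    assume ne: "inner a (A *v v) \<noteq> 0"
    define t where "t = (b - 1) / inner a (A *v v)"
    have "A *v (t *\<^sub>R v) \<in> T" unfolding T_def by simp
    then have "inner a (A *v (t *\<^sub>R v)) > b" using ab by blast
    moreover have "inner a (A *v (t *\<^sub>R v)) = b - 1"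
      using ne by (simp add: matrix_vector_mult_scaleR t_def)
    ultimately show False by simp
  qed
  have bneg: "b < 0" using ab(2) T0[of 0] unfolding T_def by (metis rangeI)
  define y where "y = - a"
  have ypos: "y$i > 0" for i
  proof -
    have "axis i 1 \<in> S" unfolding S_def by (rule hull_inc) auto
    then have "inner a (axis i 1) < b" using ab by blast
    then show ?thesis using bneg by (simp add: y_def inner_axis)
  qed
  have yA: "inner y (A *v v) = 0" for v using T0[of v] by (simp add: y_def)
  have ATy: "transpose A *v y = 0"
  proof -
    have "inner (transpose A *v y) (transpose A *v y) = 0"
      using yA by (metis dot_lmul_matrix transpose_matrix_vector)
    then show ?thesis by simp
  qed
  define c where "c = (\<Sum>i\<in>UNIV. s$i * y$i)"
  have cpos: "c > 0" unfolding c_def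
    by (rule sum_pos) (auto intro: mult_pos_pos spos ypos)
  define y' where "y' = (1/c) *\<^sub>R y"
  define w where "w = (\<chi> i. s$i * y'$i)"
  have y'pos: "y'$i > 0" for i using cpos ypos by (simp add: y'_def)
  have wpos: "\<forall>i. w$i > 0" using spos y'pos by (simp add: w_def)
  have isw: "is_wcenter A b0 w x y' s"
    unfolding is_wcenter_def
  proof (intro conjI allI)
    show "A *v x + s = b0" by (simp add: s_def)
    show "0 < s$i" for i by (rule spos)
    show "transpose A *v y' = 0" using ATy by (simp add: y'_def matrix_vector_mult_scaleR)
    show "s$i * y'$i = w$i" for i by (simp add: w_def)
  qed
  have wc: "wcenter A b0 w = (x, y', s)"
    unfolding wcenter_def
  proof (rule the_equality)
    show "case (x, y', s) of (x, y, s) \<Rightarrow> is_wcenter A b0 w x y s" using isw by simp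
  next
    fix z assume "case z of (x, y, s) \<Rightarrow> is_wcenter A b0 w x y s"
    then show "z = (x, y', s)"
      using wcenter_unique[OF _ isw wpos inj] by (cases z) auto
  qed
  have wsum: "(\<Sum>i\<in>UNIV. w$i) = 1"
    using cpos by (simp add: w_def y'_def c_def sum_divide_distrib[symmetric])
  have two: "\<exists>j. j \<noteq> i" for i :: 'm
  proof (rule ccontr)
    assume "\<not> (\<exists>j. j \<noteq> i)"
    then have all: "\<And>j. j = i" by blast
    have U: "UNIV = {i}" using all by auto
    have "A *v v = 0" for v
    proof -
      have "inner y (A *v v) = y$i * (A *v v)$i"
        unfolding inner_vec_real U by simp
      then have "(A *v v)$i = 0" using yA[of v] ypos[of i] by simp
      then show ?thesis using all by (metis vec_eq_iff zero_index)
    qed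
    then have "A *v axis undefined (1::real) = A *v 0" by simp
    then have "axis undefined (1::real) = (0::real^'n)" using inj by (meson injD)
    then show False by (simp add: axis_eq_0_iff)
  qed
  have wlt: "w$i < 1" for i
  proof -
    obtain j where j: "j \<noteq> i" using two by blast
    have "w$j \<le> (\<Sum>k\<in>UNIV-{i}. w$k)"
      by (rule member_le_sum) (use j wpos in \<open>auto intro: less_imp_le\<close>)
    moreover have "(\<Sum>k\<in>UNIV. w$k) = w$i + (\<Sum>k\<in>UNIV-{i}. w$k)"
      by (simp add: sum.remove)
    moreover have "0 < w$j" using wpos by blast
    ultimately show ?thesis using wsum by linarith
  qed
  have ineq: "y'$i * dnorm1 N Db i \<le> w$i" for i
  proof -
    have "y'$i * d i \<le> y'$i * s$i" using sge[of i] y'pos[of i] by (simp add: mult_left_mono)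
    then show ?thesis by (simp add: w_def d_def mult.commute)
  qed
  have "w \<in> Wset A b0 N Db"
    unfolding Wset_def wy_def using wpos wsum wlt ineq by (simp add: wc)
  moreover have "x = wx A b0 w" by (simp add: wx_def wc)
  ultimately show ?thesis by blast
qed

end
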